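(* Let $n\ge 2$, let $\lambda_1\ge\dots\ge\lambda_n$ be real, let $w_1,\dots,w_n\ge 0$ with $\sum_i w_i=1$, and let $\mu_1\ge\dots\ge\mu_{n-1}$ be the roots of $p(x)=\sum_{i=1}^n w_i\prod_{j\ne i}(x-\lambda_j)$. Set $U_\ell:=\sum_{i=\ell}^n w_i$ and $L_{r+1}:=\sum_{i=1}^{r+1}w_i$. Then for all integers $1\le\ell\le r\le n-1$ with $U_\ell\ne0$ and $L_{r+1}\ne 0$, $$\sum_{j=\ell}^r\lambda_{j+1}+\sum_{j=\ell}^r w_{j+1}(\lambda_\ell-\lambda_{j+1})\le\sum_{j=\ell}^r\mu_j\le\sum_{j=\ell}^r\lambda_j-\sum_{j=\ell}^r w_j(\lambda_j-\lambda_{r+1}).$$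
   Context: Roots are counted with multiplicity and listed in non-increasing order. *)

theory Defs
  imports "HOL-Computational_Algebra.Polynomial"
begin

definition wpoly :: "nat \<Rightarrow> (nat \<Rightarrow> real) \<Rightarrow> (nat \<Rightarrow> real) \<Rightarrow> real poly" where
  "wpoly n lam w = (\<Sum>i=1..n. smult (w i) (\<Prod>j\<in>{1..n} - {i}. [:- lam j, 1:]))"

end

theory Submission
  imports Defs
begin

definition WW :: "nat set \<Rightarrow> (nat \<Rightarrow> real) \<Rightarrow> (nat \<Rightarrow> real) \<Rightarrow> real poly" where
  "WW I lam w = (\<Sum>i\<in>I. smult (w i) (\<Prod>j\<in>I - {i}. [:- lam j, 1:]))"

definition cnt :: "real poly \<Rightarrow> real \<Rightarrow> nat" where
  "cnt q t = size (filter_mset (\<lambda>x. t < x) (proots q))"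

definition ff :: "nat set \<Rightarrow> (nat \<Rightarrow> real) \<Rightarrow> (nat \<Rightarrow> real) \<Rightarrow> real \<Rightarrow> real" where
  "ff I lam w t = (\<Sum>i\<in>I. w i / (t - lam i))"

lemma lin_prod_coeffs:
  fixes M :: "real multiset"
  shows "degree (\<Prod>x\<in>#M. [:- x, 1:]) = size M \<and> coeff (\<Prod>x\<in>#M. [:- x, 1:]) (size M) = 1
     \<and> (M \<noteq> {#} \<longrightarrow> coeff (\<Prod>x\<in>#M. [:- x, 1:]) (size M - 1) = - sum_mset M)"
proof (induction M)
  case empty
  then show ?case by simp
next
  case (add a M)
  let ?Q = "\<Prod>x\<in>#M. [:- x, 1:]"
  have e: "(\<Prod>x\<in>#add_mset a M. [:- x, 1:]) = smult (-a) ?Q + pCons 0 ?Q" by simp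
  have d: "degree (smult (-a) ?Q + pCons 0 ?Q) = Suc (size M)"
  proof -
    have "?Q \<noteq> 0" by auto
    then have "degree (pCons 0 ?Q) = Suc (size M)" using add by simp
    moreover have "degree (smult (-a) ?Q) < Suc (size M)" using add
      by (metis degree_smult_le le_imp_less_Suc order.trans)
    ultimately show ?thesis using degree_add_eq_right by metis
  qed
  have c1: "coeff (smult (-a) ?Q + pCons 0 ?Q) (Suc (size M)) = 1"
    using add by (simp add: coeff_eq_0)
  have c2: "coeff (smult (-a) ?Q + pCons 0 ?Q) (size M) = - (a + sum_mset M)"
  proof (cases "M = {#}")
    case True then show ?thesis by simp
  next
    case False
    then obtain k where k: "size M = Suc k" by (cases M) auto
    show ?thesis using add False k by simp
  qed
  show ?case using e d c1 c2 by simp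
qed

lemma lin_prod_set_coeffs:
  fixes lam :: "nat \<Rightarrow> real"
  assumes "finite J"
  shows "degree (\<Prod>j\<in>J. [:- lam j, 1:]) = card J \<and> coeff (\<Prod>j\<in>J. [:- lam j, 1:]) (card J) = 1
     \<and> (J \<noteq> {} \<longrightarrow> coeff (\<Prod>j\<in>J. [:- lam j, 1:]) (card J - 1) = - (\<Sum>j\<in>J. lam j))"
proof -
  have "(\<Prod>j\<in>J. [:- lam j, 1:]) = (\<Prod>x\<in># image_mset lam (mset_set J). [:- x, 1:])"
    by (simp add: prod_unfold_prod_mset multiset.map_comp comp_def)
  moreover have "sum lam J = sum_mset (image_mset lam (mset_set J))"
    by (simp add: sum_unfold_sum_mset)
  moreover have "size (image_mset lam (mset_set J)) = card J" by simp
  moreover have "J \<noteq> {} \<Longrightarrow> image_mset lam (mset_set J) \<noteq> {#}" using assms by (simp add: mset_set_empty_iff)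
  ultimately show ?thesis using lin_prod_coeffs[of "image_mset lam (mset_set J)"] by auto
qed

lemma prod_proots_dvd:
  fixes q :: "real poly"
  assumes "q \<noteq> 0"
  shows "(\<Prod>x\<in>#proots q. [:- x, 1:]) dvd q"
  using assms
proof (induction "degree q" arbitrary: q rule: less_induct)
  case less
  show ?case
  proof (cases "\<exists>a. poly q a = 0")
    case False
    then have "set_mset (proots q) = {}" using less.prems by simp
    then have "proots q = {#}" by simp
    then show ?thesis by simp
  next
    case True
    then obtain a where a: "poly q a = 0" by blast
    then have "[:- a, 1:] dvd q" using poly_eq_0_iff_dvd by blast
    then obtain q' where q': "q = [:- a, 1:] * q'" by (rule dvdE)
    have q'0: "q' \<noteq> 0" using less.prems q' by auto
    have l0: "[:- a, 1:] \<noteq> 0" by simp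
    have dq: "degree q = Suc (degree q')" using q' q'0 l0 degree_mult_eq[OF l0 q'0] by simp
    have pr: "proots q = add_mset a (proots q')"
      using q' q'0 l0 proots_mult[OF l0 q'0] by simp
    have ih: "(\<Prod>x\<in>#proots q'. [:- x, 1:]) dvd q'" using less.hyps[of q'] q'0 dq by simp
    have e: "(\<Prod>x\<in>#proots q. [:- x, 1:]) = [:- a, 1:] * (\<Prod>x\<in>#proots q'. [:- x, 1:])"
      using pr by simp
    have "[:- a, 1:] * (\<Prod>x\<in>#proots q'. [:- x, 1:]) dvd [:- a, 1:] * q'"
      by (rule mult_dvd_mono[OF dvd_refl ih])
    then show ?thesis unfolding e using q' by metis
  qed
qed

lemma WW_coeffs:
  assumes fin: "finite I" and ne: "I \<noteq> {}"
  shows "degree (WW I lam w) \<le> card I - 1"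
    and "coeff (WW I lam w) (card I - 1) = (\<Sum>i\<in>I. w i)"
    and "card I \<ge> 2 \<Longrightarrow> coeff (WW I lam w) (card I - 2) = - (\<Sum>i\<in>I. w i * (\<Sum>j\<in>I - {i}. lam j))"
proof -
  have ci: "card (I - {i}) = card I - 1" if "i \<in> I" for i using fin that by simp
  have pc: "degree (\<Prod>j\<in>I - {i}. [:- lam j, 1:]) = card I - 1 \<and> coeff (\<Prod>j\<in>I - {i}. [:- lam j, 1:]) (card I - 1) = 1
     \<and> (I - {i} \<noteq> {} \<longrightarrow> coeff (\<Prod>j\<in>I - {i}. [:- lam j, 1:]) (card I - 2) = - (\<Sum>j\<in>I - {i}. lam j))"
    if "i \<in> I" for i
  proof -
    have "card I - 1 - 1 = card I - 2" by arith
    then show ?thesis using lin_prod_set_coeffs[of "I - {i}" lam] fin ci[OF that] by simp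
  qed
  show "degree (WW I lam w) \<le> card I - 1"
    unfolding WW_def
  proof (rule degree_sum_le)
    fix i assume "i \<in> I"
    then show "degree (smult (w i) (\<Prod>j\<in>I - {i}. [:- lam j, 1:])) \<le> card I - 1"
      using pc[of i] by (metis degree_smult_le order.trans)
  qed (use fin in auto)
  show "coeff (WW I lam w) (card I - 1) = (\<Sum>i\<in>I. w i)"
    unfolding WW_def coeff_sum coeff_smult using pc by (intro sum.cong) auto
  assume c2: "card I \<ge> 2"
  have "I - {i} \<noteq> {}" if "i \<in> I" for i
    using c2 ci[OF that] by (metis card_0_eq diff_is_0_eq fin finite_Diff not_numeral_le_zero one_le_numeral diff_le_self le_antisym Suc_1 not_less_eq_eq)
  then have "(\<Sum>i\<in>I. w i * coeff (\<Prod>j\<in>I - {i}. [:- lam j, 1:]) (card I - 2)) = (\<Sum>i\<in>I. - (w i * (\<Sum>j\<in>I - {i}. lam j)))"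
    using pc by (intro sum.cong) auto
  then show "coeff (WW I lam w) (card I - 2) = - (\<Sum>i\<in>I. w i * (\<Sum>j\<in>I - {i}. lam j))"
    unfolding WW_def coeff_sum coeff_smult by (simp add: sum_negf)
qed

lemma WW_nonzero:
  assumes "finite I" "I \<noteq> {}" "(\<Sum>i\<in>I. w i) \<noteq> 0"
  shows "WW I lam w \<noteq> 0"
  using WW_coeffs(2)[OF assms(1,2), of lam w] assms(3) by auto

lemma WW_vieta:
  assumes fin: "finite I" and c2: "card I \<ge> 2" and S: "(\<Sum>i\<in>I. w i) \<noteq> 0"
    and sz: "size (proots (WW I lam w)) = card I - 1"
  shows "sum_mset (proots (WW I lam w)) = (\<Sum>i\<in>I. w i * (\<Sum>j\<in>I - {i}. lam j)) / (\<Sum>i\<in>I. w i)"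
proof -
  have ne: "I \<noteq> {}" using c2 by auto
  let ?q = "WW I lam w"
  define M where "M = proots ?q"
  define Q where "Q = (\<Prod>x\<in>#M. [:- x, 1:])"
  have q0: "?q \<noteq> 0" using WW_nonzero[OF fin ne S] .
  obtain s where s: "?q = Q * s" using prod_proots_dvd[OF q0] unfolding Q_def M_def by (rule dvdE)
  have s0: "s \<noteq> 0" using s q0 by auto
  have Q0: "Q \<noteq> 0" using s q0 by auto
  have LQ: "degree Q = size M \<and> coeff Q (size M) = 1 \<and> (M \<noteq> {#} \<longrightarrow> coeff Q (size M - 1) = - sum_mset M)"
    unfolding Q_def by (rule lin_prod_coeffs)
  have "degree ?q = degree Q + degree s" using s degree_mult_eq[OF Q0 s0] by simp
  moreover have "degree ?q \<le> card I - 1" by (rule WW_coeffs(1)[OF fin ne])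
  ultimately have "degree s = 0" using LQ sz unfolding M_def by simp
  then obtain c where c: "s = [:c:]" by (metis degree_eq_zeroE)
  have qs: "?q = smult c Q" using s c by simp
  have szM: "size M = card I - 1" using sz M_def by simp
  have Mne: "M \<noteq> {#}" using szM c2 by auto
  have e1: "coeff ?q (card I - 1) = c" using LQ szM by (subst qs) simp
  have e2: "coeff ?q (card I - 2) = - c * sum_mset M"
  proof -
    have "card I - 2 = size M - 1" using szM by simp
    then show ?thesis using LQ Mne by (subst qs) simp
  qed
  have "c = (\<Sum>i\<in>I. w i)" using e1 WW_coeffs(2)[OF fin ne] by simp
  moreover have "- c * sum_mset M = - (\<Sum>i\<in>I. w i * (\<Sum>j\<in>I - {i}. lam j))"
    using e2 WW_coeffs(3)[OF fin ne c2] by simp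
  ultimately show ?thesis using S unfolding M_def by (simp add: field_simps)
qed

lemma poly_WW: "poly (WW I lam w) x = (\<Sum>i\<in>I. w i * (\<Prod>j\<in>I - {i}. x - lam j))"
  unfolding WW_def by (simp add: poly_sum poly_prod)

lemma poly_WW_off:
  assumes fin: "finite I" and x: "x \<notin> lam ` I"
  shows "poly (WW I lam w) x = (\<Prod>j\<in>I. x - lam j) * ff I lam w x"
proof -
  have "w i * (\<Prod>j\<in>I - {i}. x - lam j) = (\<Prod>j\<in>I. x - lam j) * (w i / (x - lam i))" if "i \<in> I" for i
  proof -
    have eq: "(\<Prod>j\<in>I. x - lam j) = (x - lam i) * (\<Prod>j\<in>I - {i}. x - lam j)"
      using fin that by (simp add: prod.remove)
    have "x - lam i \<noteq> 0" using x that by auto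
    then show ?thesis by (subst eq) (simp add: field_simps)
  qed
  then show ?thesis unfolding poly_WW ff_def by (simp add: sum_distrib_left)
qed

lemma poly_WW_at:
  assumes fin: "finite I" and i: "i \<in> I" and inj: "inj_on lam I"
  shows "poly (WW I lam w) (lam i) = w i * (\<Prod>j\<in>I - {i}. lam i - lam j)"
proof -
  have z: "(\<Sum>k\<in>I - {i}. w k * (\<Prod>j\<in>I - {k}. lam i - lam j)) = 0"
  proof (rule sum.neutral, rule ballI)
    fix k assume "k \<in> I - {i}"
    then have "i \<in> I - {k}" using i by auto
    then have "(\<Prod>j\<in>I - {k}. lam i - lam j) = 0" using fin by (intro prod_zero) auto
    then show "w k * (\<Prod>j\<in>I - {k}. lam i - lam j) = 0" by simp
  qed
  have "(\<Sum>k\<in>I. w k * (\<Prod>j\<in>I - {k}. lam i - lam j)) = w i * (\<Prod>j\<in>I - {i}. lam i - lam j)"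
    using z fin i by (simp add: sum.remove)
  then show ?thesis unfolding poly_WW by simp
qed

lemma WW_del:
  assumes fin: "finite I" and i: "i \<in> I" and w0: "w i = 0"
  shows "WW I lam w = [:- lam i, 1:] * WW (I - {i}) lam w"
proof -
  have "WW I lam w = (\<Sum>m\<in>I - {i}. smult (w m) (\<Prod>j\<in>I - {m}. [:- lam j, 1:]))"
    unfolding WW_def using fin i w0 by (simp add: sum.remove)
  also have "\<dots> = (\<Sum>m\<in>I - {i}. [:- lam i, 1:] * smult (w m) (\<Prod>j\<in>I - {i} - {m}. [:- lam j, 1:]))"
  proof (rule sum.cong[OF refl])
    fix m assume m: "m \<in> I - {i}"
    have "I - {m} = insert i (I - {i} - {m})" using m i by auto
    then have "(\<Prod>j\<in>I - {m}. [:- lam j, 1:]) = [:- lam i, 1:] * (\<Prod>j\<in>I - {i} - {m}. [:- lam j, 1:])"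
      using fin by (simp add: prod.insert)
    then show "smult (w m) (\<Prod>j\<in>I - {m}. [:- lam j, 1:]) = [:- lam i, 1:] * smult (w m) (\<Prod>j\<in>I - {i} - {m}. [:- lam j, 1:])"
      by simp
  qed
  also have "\<dots> = [:- lam i, 1:] * WW (I - {i}) lam w"
    unfolding WW_def by (simp add: sum_distrib_left)
  finally show ?thesis .
qed

lemma WW_merge:
  assumes fin: "finite I" and i: "i \<in> I" and k: "k \<in> I" and ik: "i \<noteq> k" and eq: "lam i = lam k"
  shows "WW I lam w = [:- lam i, 1:] * WW (I - {k}) lam (w(i := w i + w k))"
proof -
  let ?L = "[:- lam i, 1:]"
  let ?P = "\<lambda>m. \<Prod>j\<in>I - {k} - {m}. [:- lam j, 1:]"
  have pm: "(\<Prod>j\<in>I - {m}. [:- lam j, 1:]) = ?L * ?P m" if m: "m \<in> I - {k}" for m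
  proof -
    have "I - {m} = insert k (I - {k} - {m})" using m k by auto
    then show ?thesis using fin eq by (simp add: prod.insert)
  qed
  have pk: "(\<Prod>j\<in>I - {k}. [:- lam j, 1:]) = ?L * ?P i"
    by (rule prod.remove) (use fin i ik in auto)
  have "WW I lam w = (\<Sum>m\<in>I - {k}. smult (w m) (\<Prod>j\<in>I - {m}. [:- lam j, 1:])) + smult (w k) (\<Prod>j\<in>I - {k}. [:- lam j, 1:])"
    unfolding WW_def using fin k by (simp add: sum.remove add.commute)
  also have "\<dots> = ?L * ((\<Sum>m\<in>I - {k}. smult (w m) (?P m)) + smult (w k) (?P i))"
  proof -
    have "(\<Sum>m\<in>I - {k}. smult (w m) (\<Prod>j\<in>I - {m}. [:- lam j, 1:])) = (\<Sum>m\<in>I - {k}. ?L * smult (w m) (?P m))"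
      using pm by (intro sum.cong refl) (metis mult_smult_right)
    moreover have "smult (w k) (\<Prod>j\<in>I - {k}. [:- lam j, 1:]) = ?L * smult (w k) (?P i)"
      using pk by (metis mult_smult_right)
    ultimately show ?thesis by (simp only: sum_distrib_left distrib_left)
  qed
  also have "(\<Sum>m\<in>I - {k}. smult (w m) (?P m)) + smult (w k) (?P i) = WW (I - {k}) lam (w(i := w i + w k))"
  proof -
    have "WW (I - {k}) lam (w(i := w i + w k)) = (\<Sum>m\<in>I - {k}. smult (w m) (?P m) + (if m = i then smult (w k) (?P i) else 0))"
      unfolding WW_def by (intro sum.cong) (auto simp: smult_add_left)
    also have "\<dots> = (\<Sum>m\<in>I - {k}. smult (w m) (?P m)) + smult (w k) (?P i)"
      using fin i ik by (simp add: sum.distrib)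
    finally show ?thesis by simp
  qed
  finally show ?thesis .
qed

lemma cnt_lin:
  assumes "q \<noteq> 0"
  shows "cnt ([:- a, 1:] * q) t = cnt q t + (if t < a then 1 else 0)"
proof -
  have "proots ([:- a, 1:] * q) = proots [:- a, 1:] + proots q"
    by (rule proots_mult) (use assms in auto)
  then have "proots ([:- a, 1:] * q) = add_mset a (proots q)"
    by simp
  then show ?thesis unfolding cnt_def by simp
qed

lemma ff_del:
  assumes fin: "finite I" and i: "i \<in> I" and w0: "w i = 0"
  shows "ff I lam w t = ff (I - {i}) lam w t"
  unfolding ff_def using fin i w0 by (simp add: sum.remove)

lemma ff_merge:
  assumes fin: "finite I" and i: "i \<in> I" and k: "k \<in> I" and ik: "i \<noteq> k" and eq: "lam i = lam k"
  shows "ff I lam w t = ff (I - {k}) lam (w(i := w i + w k)) t"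
proof -
  have "ff (I - {k}) lam (w(i := w i + w k)) t = (\<Sum>m\<in>I - {k}. w m / (t - lam m) + (if m = i then w k / (t - lam i) else 0))"
    unfolding ff_def by (intro sum.cong) (auto simp: add_divide_distrib)
  also have "\<dots> = (\<Sum>m\<in>I - {k}. w m / (t - lam m)) + w k / (t - lam k)"
    using fin i ik eq by (simp add: sum.distrib)
  also have "\<dots> = ff I lam w t"
    unfolding ff_def using fin k by (simp add: sum.remove)
  finally show ?thesis by simp
qed

lemma root_in_proots:
  fixes q :: "real poly"
  assumes "q \<noteq> 0" "poly q r = 0"
  shows "r \<in># proots q"
  using assms by simp

lemma filter_add_sub:
  fixes M :: "real multiset"
  assumes r: "r \<in># M" "s < r" "r < e" "a < r" "a \<le> e"
  shows "size (filter_mset (\<lambda>x. s < x \<and> x < a) M) + 1 \<le> size (filter_mset (\<lambda>x. s < x \<and> x < e) M)"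
proof -
  have "add_mset r (filter_mset (\<lambda>x. s < x \<and> x < a) M) \<subseteq># filter_mset (\<lambda>x. s < x \<and> x < e) M"
  proof (rule mset_subset_eqI)
    fix x
    show "count (add_mset r (filter_mset (\<lambda>x. s < x \<and> x < a) M)) x \<le> count (filter_mset (\<lambda>x. s < x \<and> x < e) M) x"
      using r by (auto simp: count_eq_zero_iff)
  qed
  from size_mset_mono[OF this] show ?thesis by simp
qed

lemma chain_aux:
  fixes q :: "real poly"
  assumes fin: "finite V" and q0: "q \<noteq> 0"
  shows "(\<forall>a\<in>V. \<forall>b\<in>V. a < b \<and> (\<forall>c\<in>V. \<not> (a < c \<and> c < b)) \<longrightarrow> poly q a * poly q b < 0) \<longrightarrow>
     (\<forall>s e. (\<forall>v\<in>V. s \<le> v \<and> v \<le> e) \<longrightarrow> card V \<le> size (filter_mset (\<lambda>x. s < x \<and> x < e) (proots q)) + 1)"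
  using fin
proof (induction V rule: finite_linorder_max_induct)
  case empty
  then show ?case by simp
next
  case (insert b A)
  show ?case
  proof (intro impI allI)
    fix s e
    assume H: "\<forall>a\<in>insert b A. \<forall>c\<in>insert b A. a < c \<and> (\<forall>d\<in>insert b A. \<not> (a < d \<and> d < c)) \<longrightarrow> poly q a * poly q c < 0"
    assume se: "\<forall>v\<in>insert b A. s \<le> v \<and> v \<le> e"
    show "card (insert b A) \<le> size (filter_mset (\<lambda>x. s < x \<and> x < e) (proots q)) + 1"
    proof (cases "A = {}")
      case True
      then show ?thesis by simp
    next
      case False
      define a where "a = Max A"
      have aA: "a \<in> A" using False insert.hyps(1) a_def by simp
      have amax: "\<forall>c\<in>A. c \<le> a" using insert.hyps(1) a_def by simp
      have ab: "a < b" using aA insert.hyps(2) by simp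
      have bA: "b \<notin> A" using insert.hyps(2) by auto
      have HA: "\<forall>x\<in>A. \<forall>y\<in>A. x < y \<and> (\<forall>d\<in>A. \<not> (x < d \<and> d < y)) \<longrightarrow> poly q x * poly q y < 0"
      proof (intro ballI impI)
        fix x y assume xy: "x \<in> A" "y \<in> A" "x < y \<and> (\<forall>d\<in>A. \<not> (x < d \<and> d < y))"
        have "y < b" using xy insert.hyps(2) by simp
        then have "\<forall>d\<in>insert b A. \<not> (x < d \<and> d < y)" using xy by auto
        then show "poly q x * poly q y < 0" using H xy by auto
      qed
      have "\<forall>d\<in>insert b A. \<not> (a < d \<and> d < b)" using amax by auto
      then have "poly q a * poly q b < 0" using H aA ab by auto
      then obtain r where r: "a < r" "r < b" "poly q r = 0" using poly_IVT[OF ab] by auto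
      have IH: "card A \<le> size (filter_mset (\<lambda>x. s < x \<and> x < a) (proots q)) + 1"
        using insert.IH HA se amax by auto
      have "size (filter_mset (\<lambda>x. s < x \<and> x < a) (proots q)) + 1 \<le> size (filter_mset (\<lambda>x. s < x \<and> x < e) (proots q))"
      proof (rule filter_add_sub)
        show "r \<in># proots q" using q0 r by simp
        show "s < r" using se aA r by force
        show "r < e" using se r by force
        show "a < r" by fact
        show "a \<le> e" using se aA by force
      qed
      then show ?thesis using IH bA insert.hyps(1) by simp
    qed
  qed
qed

lemma chain:
  fixes q :: "real poly"
  assumes "finite V" "q \<noteq> 0"
    "\<And>a b. a \<in> V \<Longrightarrow> b \<in> V \<Longrightarrow> a < b \<Longrightarrow> (\<forall>c\<in>V. \<not> (a < c \<and> c < b)) \<Longrightarrow> poly q a * poly q b < 0"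
    "\<forall>v\<in>V. s \<le> v \<and> v \<le> e"
  shows "card V \<le> size (filter_mset (\<lambda>x. s < x \<and> x < e) (proots q)) + 1"
  using chain_aux[OF assms(1,2)] assms(3,4) by blast

lemma size_split:
  fixes M :: "real multiset"
  shows "size M = size (filter_mset (\<lambda>x. t < x) M) + size (filter_mset (\<lambda>x. x < t) M) + count M t"
proof -
  have "M = filter_mset (\<lambda>x. t < x) M + filter_mset (\<lambda>x. \<not> t < x) M" by (rule multiset_partition)
  moreover have "filter_mset (\<lambda>x. \<not> t < x) M = filter_mset (\<lambda>x. x < t) M + filter_mset (\<lambda>x. x = t) M"
    by (rule multiset_eqI) auto
  moreover have "size (filter_mset (\<lambda>x. x = t) M) = count M t"
    by (simp add: filter_eq_replicate_mset)
  ultimately show ?thesis by (metis size_union add.assoc)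
qed

lemma msum_le:
  fixes M1 M2 :: "real multiset"
  assumes "size M1 = size M2"
    and "\<forall>t. size (filter_mset (\<lambda>x. t < x) M1) \<le> size (filter_mset (\<lambda>x. t < x) M2)"
  shows "sum_mset M1 \<le> sum_mset M2"
  using assms
proof (induction "size M1" arbitrary: M1 M2)
  case 0
  then show ?case by simp
next
  case (Suc n)
  then have ne1: "M1 \<noteq> {#}" and ne2: "M2 \<noteq> {#}" by auto
  define a where "a = Max (set_mset M1)"
  define b where "b = Max (set_mset M2)"
  have a1: "a \<in># M1" using ne1 a_def by simp
  have b2: "b \<in># M2" using ne2 b_def by simp
  have amax: "\<forall>x\<in>#M1. x \<le> a" using a_def by simp
  have bmax: "\<forall>x\<in>#M2. x \<le> b" using b_def by simp
  have "filter_mset (\<lambda>x. b < x) M2 = {#}" using bmax by (auto simp: filter_mset_eq_mempty_iff)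
  then have "size (filter_mset (\<lambda>x. b < x) M1) = 0" using Suc.prems(2) by (metis le_zero_eq size_empty)
  then have ab: "a \<le> b" using a1 by (metis (mono_tags, lifting) filter_mset_eq_mempty_iff not_less size_eq_0_iff_empty)
  define M1' where "M1' = M1 - {#a#}"
  define M2' where "M2' = M2 - {#b#}"
  have m1: "M1 = add_mset a M1'" using a1 M1'_def by simp
  have m2: "M2 = add_mset b M2'" using b2 M2'_def by simp
  have "\<forall>t. size (filter_mset (\<lambda>x. t < x) M1') \<le> size (filter_mset (\<lambda>x. t < x) M2')"
  proof
    fix t
    have h: "size (filter_mset (\<lambda>x. t < x) M1) \<le> size (filter_mset (\<lambda>x. t < x) M2)" using Suc.prems(2) by blast
    show "size (filter_mset (\<lambda>x. t < x) M1') \<le> size (filter_mset (\<lambda>x. t < x) M2')"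
    proof (cases "t < a")
      case True
      then show ?thesis using h ab m1 m2 by auto
    next
      case False
      then have "filter_mset (\<lambda>x. t < x) M1' = {#}" using amax m1 by (auto simp: filter_mset_eq_mempty_iff)
      then show ?thesis by (metis le0 size_empty)
    qed
  qed
  moreover have "n = size M1'" using Suc.hyps(2) m1 by simp
  moreover have "size M1' = size M2'" using Suc.prems(1) m1 m2 by simp
  ultimately have "sum_mset M1' \<le> sum_mset M2'" using Suc.hyps(1) by blast
  then show ?case using m1 m2 ab by simp
qed

lemma perturb:
  fixes F :: "real set"
  assumes "finite F"
  shows "\<exists>t'>t. \<forall>x\<in>F. (t < x \<longleftrightarrow> t' < x)"
proof (cases "{x\<in>F. t < x} = {}")
  case True
  then show ?thesis by (intro exI[of _ "t + 1"]) auto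
next
  case False
  define m where "m = Min {x\<in>F. t < x}"
  have fin: "finite {x\<in>F. t < x}" using assms by simp
  have m1: "m \<in> {x\<in>F. t < x}" using Min_in[OF fin False] m_def by simp
  have m2: "\<forall>x\<in>F. t < x \<longrightarrow> m \<le> x" using Min_le[OF fin] m_def by simp
  show ?thesis
  proof (intro exI[of _ "(t + m) / 2"] conjI ballI)
    show "t < (t + m) / 2" using m1 by simp
    fix x assume "x \<in> F"
    then show "(t < x) = ((t + m) / 2 < x)" using m1 m2 by force
  qed
qed

lemma prodpos:
  fixes lam :: "nat \<Rightarrow> real"
  assumes "\<forall>j\<in>J. (u - lam j) * (v - lam j) > 0"
  shows "(\<Prod>j\<in>J. u - lam j) * (\<Prod>j\<in>J. v - lam j) > 0"
proof -
  have "(\<Prod>j\<in>J. u - lam j) * (\<Prod>j\<in>J. v - lam j) = (\<Prod>j\<in>J. (u - lam j) * (v - lam j))"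
    by (simp add: prod.distrib)
  also have "\<dots> > 0" using assms by (intro prod_pos) auto
  finally show ?thesis .
qed

lemma side_pos:
  fixes x u v :: real
  assumes "x < min u v \<or> x > max u v"
  shows "(u - x) * (v - x) > 0"
  using assms by (auto intro: mult_pos_pos mult_neg_neg)

lemma filter_mono_size:
  fixes M :: "real multiset"
  assumes "\<And>x. P x \<Longrightarrow> Q x"
  shows "size (filter_mset P M) \<le> size (filter_mset Q M)"
proof -
  have "filter_mset P M \<subseteq># filter_mset Q M"
    by (rule mset_subset_eqI) (use assms in auto)
  then show ?thesis by (rule size_mset_mono)
qed

lemma arith_final:
  fixes A B C Ka Kb N :: nat
  assumes "Ka + (if P then 1 else 0) \<le> A + 1" "Kb + (if Q then 1 else 0) \<le> B + 1"
    "(if Z then 1 else 0) \<le> C" "A + B + C \<le> N - 1" "Ka + Kb = N" "N \<ge> 1"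
    "P \<or> Q \<or> Z" "\<not> (P \<and> Q)" "\<not> (P \<and> Z)" "\<not> (Q \<and> Z)"
  shows "A = Ka - (if Q \<or> Z then 1 else 0)"
proof (cases P)
  case True
  then show ?thesis using assms by (simp split: if_splits)
next
  case False
  then show ?thesis using assms by (cases Q) (simp_all split: if_splits)
qed

lemma CF_generic:
  assumes fin: "finite I" and ne: "I \<noteq> {}" and wpos: "\<forall>i\<in>I. 0 < w i"
    and inj: "inj_on lam I" and t: "t \<notin> lam ` I"
  shows "cnt (WW I lam w) t = card {i\<in>I. t < lam i} - (if ff I lam w t \<le> 0 then 1 else 0)"
proof -
  let ?p = "WW I lam w"
  define F where "F = ff I lam w t"
  have S: "(\<Sum>i\<in>I. w i) > 0" using wpos fin ne by (intro sum_pos) auto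
  have p0: "?p \<noteq> 0" using WW_nonzero[OF fin ne] S by simp
  have pt: "poly ?p t = (\<Prod>j\<in>I. t - lam j) * F"
    unfolding F_def by (rule poly_WW_off[OF fin t])
  have lamne: "lam j \<noteq> lam i" if "i \<in> I" "j \<in> I" "j \<noteq> i" for i j
    using inj that by (auto dest: inj_onD)
  have S1: "poly ?p (lam k) * poly ?p (lam i) < 0"
    if ik: "i \<in> I" "k \<in> I" "lam k < lam i" and nb: "\<forall>j\<in>I. \<not> (lam k < lam j \<and> lam j < lam i)" for i k
  proof -
    have ki: "k \<noteq> i" using ik by auto
    let ?J = "I - {i} - {k}"
    have e1: "(\<Prod>j\<in>I - {i}. lam i - lam j) = (lam i - lam k) * (\<Prod>j\<in>?J. lam i - lam j)"
      using fin ik ki by (subst prod.remove[of _ k]) auto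
    have e2: "(\<Prod>j\<in>I - {k}. lam k - lam j) = (lam k - lam i) * (\<Prod>j\<in>?J. lam k - lam j)"
    proof -
      have "I - {k} - {i} = ?J" by auto
      then show ?thesis using fin ik ki by (subst prod.remove[of _ i]) auto
    qed
    have pos: "(\<Prod>j\<in>?J. lam i - lam j) * (\<Prod>j\<in>?J. lam k - lam j) > 0"
    proof (rule prodpos, rule ballI)
      fix j assume j: "j \<in> ?J"
      have "lam j \<noteq> lam i" "lam j \<noteq> lam k" using j lamne ik by auto
      then have "lam j < min (lam i) (lam k) \<or> lam j > max (lam i) (lam k)" using nb j ik by force
      then show "(lam i - lam j) * (lam k - lam j) > 0" by (rule side_pos)
    qed
    have "poly ?p (lam k) * poly ?p (lam i) = (w i * w k) * ((lam i - lam k) * (lam k - lam i)) *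
       ((\<Prod>j\<in>?J. lam i - lam j) * (\<Prod>j\<in>?J. lam k - lam j))"
    proof -
      have pi: "poly ?p (lam i) = w i * ((lam i - lam k) * (\<Prod>j\<in>?J. lam i - lam j))"
        using poly_WW_at[OF fin ik(1) inj] e1 by simp
      have pk: "poly ?p (lam k) = w k * ((lam k - lam i) * (\<Prod>j\<in>?J. lam k - lam j))"
        using poly_WW_at[OF fin ik(2) inj] e2 by simp
      show ?thesis unfolding pi pk by (simp only: mult_ac)
    qed
    moreover have "(w i * w k) > 0" using wpos ik by simp
    moreover have "(lam i - lam k) * (lam k - lam i) < 0" using ik by (simp add: mult_pos_neg)
    ultimately show ?thesis using pos by (simp add: mult_pos_neg mult_neg_pos mult_less_0_iff)
  qed
  have S2: "poly ?p t * poly ?p (lam i) < 0"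
    if i: "i \<in> I" "t < lam i" and nb: "\<forall>j\<in>I. \<not> (t < lam j \<and> lam j < lam i)" and Fp: "F > 0" for i
  proof -
    have e1: "(\<Prod>j\<in>I. t - lam j) = (t - lam i) * (\<Prod>j\<in>I - {i}. t - lam j)"
      using fin i by (subst prod.remove[of _ i]) auto
    have pos: "(\<Prod>j\<in>I - {i}. t - lam j) * (\<Prod>j\<in>I - {i}. lam i - lam j) > 0"
    proof (rule prodpos, rule ballI)
      fix j assume j: "j \<in> I - {i}"
      have "lam j \<noteq> lam i" "lam j \<noteq> t" using j lamne i t by auto
      then have "lam j < min t (lam i) \<or> lam j > max t (lam i)" using nb j i by force
      then show "(t - lam j) * (lam i - lam j) > 0" by (rule side_pos)
    qed
    have "poly ?p t * poly ?p (lam i) = (F * w i) * (t - lam i) *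
       ((\<Prod>j\<in>I - {i}. t - lam j) * (\<Prod>j\<in>I - {i}. lam i - lam j))"
    proof -
      have pa: "poly ?p (lam i) = w i * (\<Prod>j\<in>I - {i}. lam i - lam j)"
        using poly_WW_at[OF fin i(1) inj] by simp
      have pb: "poly ?p t = (t - lam i) * (\<Prod>j\<in>I - {i}. t - lam j) * F"
        using pt e1 by simp
      show ?thesis unfolding pa pb by (simp only: mult_ac)
    qed
    moreover have "F * w i > 0" using wpos i Fp by simp
    moreover have "t - lam i < 0" using i by simp
    ultimately show ?thesis using pos by (simp add: mult_pos_neg mult_neg_pos mult_less_0_iff)
  qed
  have S3: "poly ?p (lam m) * poly ?p t < 0"
    if m: "m \<in> I" "lam m < t" and nb: "\<forall>j\<in>I. \<not> (lam m < lam j \<and> lam j < t)" and Fn: "F < 0" for m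
  proof -
    have e1: "(\<Prod>j\<in>I. t - lam j) = (t - lam m) * (\<Prod>j\<in>I - {m}. t - lam j)"
      using fin m by (subst prod.remove[of _ m]) auto
    have pos: "(\<Prod>j\<in>I - {m}. t - lam j) * (\<Prod>j\<in>I - {m}. lam m - lam j) > 0"
    proof (rule prodpos, rule ballI)
      fix j assume j: "j \<in> I - {m}"
      have "lam j \<noteq> lam m" "lam j \<noteq> t" using j lamne m t by auto
      then have "lam j < min t (lam m) \<or> lam j > max t (lam m)" using nb j m by force
      then show "(t - lam j) * (lam m - lam j) > 0" by (rule side_pos)
    qed
    have "poly ?p (lam m) * poly ?p t = (F * w m) * (t - lam m) *
       ((\<Prod>j\<in>I - {m}. t - lam j) * (\<Prod>j\<in>I - {m}. lam m - lam j))"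
    proof -
      have pa: "poly ?p (lam m) = w m * (\<Prod>j\<in>I - {m}. lam m - lam j)"
        using poly_WW_at[OF fin m(1) inj] by simp
      have pb: "poly ?p t = (t - lam m) * (\<Prod>j\<in>I - {m}. t - lam j) * F"
        using pt e1 by simp
      show ?thesis unfolding pa pb by (simp only: mult_ac)
    qed
    moreover have "F * w m < 0" using wpos m Fn by (simp add: mult_neg_pos)
    moreover have "t - lam m > 0" using m by simp
    ultimately show ?thesis using pos by (simp add: mult_pos_neg mult_neg_pos mult_less_0_iff)
  qed
  define Va where "Va = lam ` {i\<in>I. t < lam i} \<union> (if F > 0 then {t} else {})"
  define e where "e = Max (insert t (lam ` I))"
  have finVa: "finite Va" using fin Va_def by simp
  have cVa: "card Va = card {i\<in>I. t < lam i} + (if F > 0 then 1 else 0)"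
  proof -
    have c1: "card (lam ` {i\<in>I. t < lam i}) = card {i\<in>I. t < lam i}"
      using inj by (intro card_image) (auto intro: inj_on_subset)
    have "t \<notin> lam ` {i\<in>I. t < lam i}" by auto
    then show ?thesis unfolding Va_def using c1 fin by auto
  qed
  have A1: "card Va \<le> size (filter_mset (\<lambda>x. t < x \<and> x < e) (proots ?p)) + 1"
  proof (rule chain[OF finVa p0])
    fix a b assume ab: "a \<in> Va" "b \<in> Va" "a < b" and nb: "\<forall>c\<in>Va. \<not> (a < c \<and> c < b)"
    have ta: "t \<le> a" using ab Va_def by (auto split: if_splits)
    obtain i where i: "i \<in> I" "t < lam i" "b = lam i" using ab ta Va_def by (auto split: if_splits)
    show "poly ?p a * poly ?p b < 0"
    proof (cases "a = t")
      case True
      then have Fp: "F > 0" using ab(1) Va_def i by (auto split: if_splits)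
      have "\<forall>j\<in>I. \<not> (t < lam j \<and> lam j < lam i)"
      proof (intro ballI notI)
        fix j assume j: "j \<in> I" "t < lam j \<and> lam j < lam i"
        then have "lam j \<in> Va" unfolding Va_def by auto
        then show False using nb i True j by auto
      qed
      then show ?thesis using S2[OF i(1,2) _ Fp] True i by simp
    next
      case False
      then obtain k where k: "k \<in> I" "t < lam k" "a = lam k" using ab(1) Va_def by (auto split: if_splits)
      have "\<forall>j\<in>I. \<not> (lam k < lam j \<and> lam j < lam i)"
      proof (intro ballI notI)
        fix j assume j: "j \<in> I" "lam k < lam j \<and> lam j < lam i"
        then have "lam j \<in> Va" unfolding Va_def using k by auto
        then show False using nb k i j by auto
      qed
      then show ?thesis using S1[OF i(1) k(1)] k i ab by simp
    qed
  next
    show "\<forall>v\<in>Va. t \<le> v \<and> v \<le> e"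
      unfolding Va_def e_def using fin by (auto split: if_splits)
  qed
  define Vb where "Vb = lam ` {i\<in>I. lam i < t} \<union> (if F < 0 then {t} else {})"
  define s where "s = Min (insert t (lam ` I))"
  have finVb: "finite Vb" using fin Vb_def by simp
  have cVb: "card Vb = card {i\<in>I. lam i < t} + (if F < 0 then 1 else 0)"
  proof -
    have c1: "card (lam ` {i\<in>I. lam i < t}) = card {i\<in>I. lam i < t}"
      using inj by (intro card_image) (auto intro: inj_on_subset)
    have "t \<notin> lam ` {i\<in>I. lam i < t}" by auto
    then show ?thesis unfolding Vb_def using c1 fin by auto
  qed
  have B1: "card Vb \<le> size (filter_mset (\<lambda>x. s < x \<and> x < t) (proots ?p)) + 1"
  proof (rule chain[OF finVb p0])
    fix a b assume ab: "a \<in> Vb" "b \<in> Vb" "a < b" and nb: "\<forall>c\<in>Vb. \<not> (a < c \<and> c < b)"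
    have tb: "b \<le> t" using ab Vb_def by (auto split: if_splits)
    have "a \<noteq> t" using ab tb by auto
    then have "a \<in> lam ` {i\<in>I. lam i < t}" using ab(1) unfolding Vb_def by (auto split: if_splits)
    then obtain m where m: "m \<in> I" "lam m < t" "a = lam m" by auto
    show "poly ?p a * poly ?p b < 0"
    proof (cases "b = t")
      case True
      have "t \<notin> lam ` {i\<in>I. lam i < t}" by auto
      then have Fn: "F < 0" using ab(2) True unfolding Vb_def by (auto split: if_splits)
      have "\<forall>j\<in>I. \<not> (lam m < lam j \<and> lam j < t)"
      proof (intro ballI notI)
        fix j assume j: "j \<in> I" "lam m < lam j \<and> lam j < t"
        then have "lam j \<in> Vb" unfolding Vb_def by auto
        then show False using nb m True j by auto
      qed
      then show ?thesis using S3[OF m(1,2) _ Fn] True m by simp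
    next
      case False
      then have "b \<in> lam ` {i\<in>I. lam i < t}" using ab(2) unfolding Vb_def by (auto split: if_splits)
      then obtain i where i: "i \<in> I" "lam i < t" "b = lam i" by auto
      have "\<forall>j\<in>I. \<not> (lam m < lam j \<and> lam j < lam i)"
      proof (intro ballI notI)
        fix j assume j: "j \<in> I" "lam m < lam j \<and> lam j < lam i"
        then have "lam j \<in> Vb" unfolding Vb_def using i by auto
        then show False using nb m i j by auto
      qed
      then show ?thesis using S1[OF i(1) m(1)] m i ab by simp
    qed
  next
    show "\<forall>v\<in>Vb. s \<le> v \<and> v \<le> t"
      unfolding Vb_def s_def using fin by (auto split: if_splits)
  qed
  have A2: "size (filter_mset (\<lambda>x. t < x \<and> x < e) (proots ?p)) \<le> cnt ?p t"
    unfolding cnt_def by (rule filter_mono_size) auto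
  have B2: "size (filter_mset (\<lambda>x. s < x \<and> x < t) (proots ?p)) \<le> size (filter_mset (\<lambda>x. x < t) (proots ?p))"
    by (rule filter_mono_size) auto
  have cnt0: "(if F = 0 then 1 else 0) \<le> count (proots ?p) t"
  proof (cases "F = 0")
    case True
    then have "poly ?p t = 0" using pt by simp
    then have "t \<in># proots ?p" using p0 by simp
    then show ?thesis using True by simp
  qed simp
  have tot: "size (proots ?p) = cnt ?p t + size (filter_mset (\<lambda>x. x < t) (proots ?p)) + count (proots ?p) t"
    unfolding cnt_def by (rule size_split)
  have deg: "size (proots ?p) \<le> card I - 1"
    using size_proots_le[of ?p] WW_coeffs(1)[OF fin ne, of lam w] by simp
  have cI: "card {i\<in>I. t < lam i} + card {i\<in>I. lam i < t} = card I"
  proof -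
    have "{i\<in>I. t < lam i} \<union> {i\<in>I. lam i < t} = I" using t by force
    moreover have "{i\<in>I. t < lam i} \<inter> {i\<in>I. lam i < t} = {}" by auto
    ultimately show ?thesis using fin by (metis card_Un_disjoint finite_Un)
  qed
  have cIpos: "card I \<ge> 1" using fin ne by (simp add: Suc_leI card_gt_0_iff)
  show ?thesis
  proof -
    have a: "card {i\<in>I. t < lam i} + (if F > 0 then 1 else 0) \<le> cnt ?p t + 1"
      using A1 A2 cVa by linarith
    have b: "card {i\<in>I. lam i < t} + (if F < 0 then 1 else 0) \<le> size (filter_mset (\<lambda>x. x < t) (proots ?p)) + 1"
      using B1 B2 cVb by linarith
    have c: "cnt ?p t + size (filter_mset (\<lambda>x. x < t) (proots ?p)) + count (proots ?p) t \<le> card I - 1"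
      using tot deg by linarith
    have "cnt ?p t = card {i\<in>I. t < lam i} - (if F < 0 \<or> F = 0 then 1 else 0)"
      by (rule arith_final[OF a b cnt0 c cI cIpos]) auto
    moreover have "(F < 0 \<or> F = 0) = (F \<le> 0)" by auto
    ultimately show ?thesis using F_def by simp
  qed
qed

lemma ff_pos:
  assumes fin: "finite I" and w: "\<forall>i\<in>I. 0 \<le> w i" and S: "(\<Sum>i\<in>I. w i) > 0"
    and below: "\<forall>i\<in>I. lam i < t"
  shows "ff I lam w t > 0"
proof -
  have "\<exists>i\<in>I. w i > 0"
  proof (rule ccontr)
    assume "\<not> (\<exists>i\<in>I. w i > 0)"
    then have "\<And>i. i \<in> I \<Longrightarrow> w i \<le> 0" by auto
    then have "(\<Sum>i\<in>I. w i) \<le> 0" by (rule sum_nonpos)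
    then show False using S by simp
  qed
  then obtain i where i: "i \<in> I" "w i > 0" by blast
  have "w i / (t - lam i) > 0" using i below by simp
  moreover have "\<forall>j\<in>I. 0 \<le> w j / (t - lam j)" using w below by (simp add: less_imp_le)
  ultimately have "0 < (\<Sum>j\<in>I. w j / (t - lam j))"
    using fin i by (metis (no_types, lifting) sum_pos2)
  then show ?thesis unfolding ff_def .
qed

lemma ff_neg:
  assumes fin: "finite I" and w: "\<forall>i\<in>I. 0 \<le> w i" and S: "(\<Sum>i\<in>I. w i) > 0"
    and above: "\<forall>i\<in>I. t < lam i"
  shows "ff I lam w t < 0"
proof -
  have "\<exists>i\<in>I. w i > 0"
  proof (rule ccontr)
    assume "\<not> (\<exists>i\<in>I. w i > 0)"
    then have "\<And>i. i \<in> I \<Longrightarrow> w i \<le> 0" by auto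
    then have "(\<Sum>i\<in>I. w i) \<le> 0" by (rule sum_nonpos)
    then show False using S by simp
  qed
  then obtain i where i: "i \<in> I" "w i > 0" by blast
  have "w i / (t - lam i) < 0" using i above by (simp add: divide_pos_neg)
  moreover have "\<forall>j\<in>I. w j / (t - lam j) \<le> 0" using w above by (simp add: divide_nonneg_neg less_imp_le)
  ultimately have "(\<Sum>j\<in>I. w j / (t - lam j)) < 0"
  proof -
    assume a: "w i / (t - lam i) < 0" "\<forall>j\<in>I. w j / (t - lam j) \<le> 0"
    have "0 < (\<Sum>j\<in>I. - (w j / (t - lam j)))"
      using fin i a by (intro sum_pos2[of I i]) auto
    then show ?thesis by (simp add: sum_negf)
  qed
  then show ?thesis unfolding ff_def .
qed

lemma CF:
  assumes "finite I" "I \<noteq> {}" "\<forall>i\<in>I. 0 \<le> w i" "(\<Sum>i\<in>I. w i) > 0" "t \<notin> lam ` I"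
  shows "cnt (WW I lam w) t = card {i\<in>I. t < lam i} - (if ff I lam w t \<le> 0 then 1 else 0)"
  using assms
proof (induction "card I" arbitrary: I w rule: less_induct)
  case less
  note fin = less.prems(1) and ne = less.prems(2) and wnn = less.prems(3) and S = less.prems(4) and t = less.prems(5)
  have nz: "ff I lam w t \<le> 0 \<Longrightarrow> card {i\<in>I. t < lam i} \<ge> 1"
  proof -
    assume f: "ff I lam w t \<le> 0"
    have "\<exists>i\<in>I. t < lam i"
    proof (rule ccontr)
      assume "\<not> (\<exists>i\<in>I. t < lam i)"
      then have "\<forall>i\<in>I. lam i < t" using t by force
      then have "ff I lam w t > 0" by (rule ff_pos[OF fin wnn S])
      then show False using f by simp
    qed
    then have "{i\<in>I. t < lam i} \<noteq> {}" by auto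
    then show ?thesis using fin by (simp add: Suc_leI card_gt_0_iff)
  qed
  consider (z) "\<exists>i\<in>I. w i = 0" | (m) "\<exists>i\<in>I. \<exists>k\<in>I. i \<noteq> k \<and> lam i = lam k"
    | (g) "\<forall>i\<in>I. 0 < w i" "inj_on lam I"
    using wnn by (force simp: inj_on_def)
  then show ?case
  proof cases
    case z
    then obtain i where i: "i \<in> I" "w i = 0" by blast
    define I' where "I' = I - {i}"
    have S': "(\<Sum>j\<in>I'. w j) = (\<Sum>j\<in>I. w j)" unfolding I'_def using fin i by (simp add: sum.remove)
    have ne': "I' \<noteq> {}"
    proof
      assume "I' = {}"
      then have "I = {i}" using i I'_def by auto
      then show False using S i by simp
    qed
    have fin': "finite I'" using fin I'_def by simp
    have lt: "card I' < card I" unfolding I'_def using fin i by (meson card_Diff1_less)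
    have IH: "cnt (WW I' lam w) t = card {j\<in>I'. t < lam j} - (if ff I' lam w t \<le> 0 then 1 else 0)"
    proof -
      have wnn': "\<forall>j\<in>I'. 0 \<le> w j" using wnn I'_def by auto
      have S'': "(\<Sum>j\<in>I'. w j) > 0" using S S' by simp
      have t': "t \<notin> lam ` I'" using t I'_def by auto
      show ?thesis by (rule less.hyps[OF lt fin' ne' wnn' S'' t'])
    qed
    have nz': "WW I' lam w \<noteq> 0" using WW_nonzero[OF fin' ne'] S S' by simp
    have e: "WW I lam w = [:- lam i, 1:] * WW I' lam w" unfolding I'_def by (rule WW_del[where w=w and lam=lam, OF fin i(1) i(2)])
    have ff: "ff I lam w t = ff I' lam w t" unfolding I'_def by (rule ff_del[where w=w and lam=lam, OF fin i(1) i(2)])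
    have c: "card {j\<in>I. t < lam j} = card {j\<in>I'. t < lam j} + (if t < lam i then 1 else 0)"
    proof -
      have "{j\<in>I. t < lam j} = (if t < lam i then insert i {j\<in>I'. t < lam j} else {j\<in>I'. t < lam j})"
        using i unfolding I'_def by auto
      then show ?thesis using fin' I'_def by simp
    qed
    have nzI': "ff I' lam w t \<le> 0 \<Longrightarrow> card {j\<in>I'. t < lam j} \<ge> 1"
    proof -
      assume f: "ff I' lam w t \<le> 0"
      have "\<exists>j\<in>I'. t < lam j"
      proof (rule ccontr)
        assume "\<not> (\<exists>j\<in>I'. t < lam j)"
        then have "\<forall>j\<in>I'. lam j < t" using t I'_def by force
        moreover have "\<forall>j\<in>I'. 0 \<le> w j" using wnn I'_def by auto
        moreover have "(\<Sum>j\<in>I'. w j) > 0" using S S' by simp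
        ultimately have "ff I' lam w t > 0" using ff_pos[OF fin'] by blast
        then show False using f by simp
      qed
      then have "{j\<in>I'. t < lam j} \<noteq> {}" by auto
      then show ?thesis using fin' by (simp add: Suc_leI card_gt_0_iff)
    qed
    show ?thesis unfolding e cnt_lin[OF nz'] IH ff c using nzI' by auto
  next
    case m
    then obtain i k where ik: "i \<in> I" "k \<in> I" "i \<noteq> k" "lam i = lam k" by blast
    define I' where "I' = I - {k}"
    define w' where "w' = w(i := w i + w k)"
    have fin': "finite I'" using fin I'_def by simp
    have iI': "i \<in> I'" using ik I'_def by simp
    have ne': "I' \<noteq> {}" using iI' by auto
    have lt: "card I' < card I" unfolding I'_def using fin ik by (meson card_Diff1_less)
    have wnn': "\<forall>j\<in>I'. 0 \<le> w' j" using wnn ik unfolding w'_def I'_def by auto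
    have S': "(\<Sum>j\<in>I'. w' j) = (\<Sum>j\<in>I. w j)"
    proof -
      have "(\<Sum>j\<in>I'. w' j) = (\<Sum>j\<in>I'. w j + (if j = i then w k else 0))"
        unfolding w'_def by (intro sum.cong) auto
      also have "\<dots> = (\<Sum>j\<in>I'. w j) + w k" using fin' iI' by (simp add: sum.distrib)
      also have "\<dots> = (\<Sum>j\<in>I. w j)" unfolding I'_def using sum.remove[OF fin ik(2), of w] by linarith
      finally show ?thesis .
    qed
    have t': "t \<notin> lam ` I'" using t I'_def by auto
    have IH: "cnt (WW I' lam w') t = card {j\<in>I'. t < lam j} - (if ff I' lam w' t \<le> 0 then 1 else 0)"
    proof -
      have S'': "(\<Sum>j\<in>I'. w' j) > 0" using S S' by simp
      show ?thesis by (rule less.hyps[OF lt fin' ne' wnn' S'' t'])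
    qed
    have nz': "WW I' lam w' \<noteq> 0" using WW_nonzero[OF fin' ne'] S S' by simp
    have e: "WW I lam w = [:- lam i, 1:] * WW I' lam w'"
      unfolding I'_def w'_def by (rule WW_merge[where w=w and lam=lam, OF fin ik])
    have ff: "ff I lam w t = ff I' lam w' t" unfolding I'_def w'_def by (rule ff_merge[where w=w and lam=lam, OF fin ik])
    have c: "card {j\<in>I. t < lam j} = card {j\<in>I'. t < lam j} + (if t < lam i then 1 else 0)"
    proof -
      have "{j\<in>I. t < lam j} = (if t < lam k then insert k {j\<in>I'. t < lam j} else {j\<in>I'. t < lam j})"
        using ik unfolding I'_def by auto
      then show ?thesis using fin' I'_def ik by simp
    qed
    have nzI': "ff I' lam w' t \<le> 0 \<Longrightarrow> card {j\<in>I'. t < lam j} \<ge> 1"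
    proof -
      assume f: "ff I' lam w' t \<le> 0"
      have "\<exists>j\<in>I'. t < lam j"
      proof (rule ccontr)
        assume "\<not> (\<exists>j\<in>I'. t < lam j)"
        then have "\<forall>j\<in>I'. lam j < t" using t' by force
        moreover have "(\<Sum>j\<in>I'. w' j) > 0" using S S' by simp
        ultimately have "ff I' lam w' t > 0" using ff_pos[OF fin' wnn'] by blast
        then show False using f by simp
      qed
      then have "{j\<in>I'. t < lam j} \<noteq> {}" by auto
      then show ?thesis using fin' by (simp add: Suc_leI card_gt_0_iff)
    qed
    show ?thesis unfolding e cnt_lin[OF nz'] IH ff c using nzI' by auto
  next
    case g
    then show ?thesis using CF_generic[OF fin ne _ _ t] by simp
  qed
qed

lemma size_proots_WW:
  assumes fin: "finite I" and ne: "I \<noteq> {}" and wnn: "\<forall>i\<in>I. 0 \<le> w i" and S: "(\<Sum>i\<in>I. w i) > 0"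
  shows "size (proots (WW I lam w)) = card I - 1"
proof -
  define t0 where "t0 = Min (lam ` I) - 1"
  have lt: "\<forall>i\<in>I. t0 < lam i"
  proof
    fix i assume i: "i \<in> I"
    have "Min (lam ` I) \<le> lam i" by (rule Min_le) (use fin i in auto)
    then show "t0 < lam i" unfolding t0_def by linarith
  qed
  then have t: "t0 \<notin> lam ` I" by auto
  have fneg: "ff I lam w t0 < 0" by (rule ff_neg[OF fin wnn S lt])
  have "{i\<in>I. t0 < lam i} = I" using lt by auto
  then have "cnt (WW I lam w) t0 = card I - 1" using CF[OF fin ne wnn S t] fneg by simp
  moreover have "cnt (WW I lam w) t0 \<le> size (proots (WW I lam w))"
    unfolding cnt_def by (rule size_filter_mset_lesseq)
  moreover have "size (proots (WW I lam w)) \<le> card I - 1"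
    using size_proots_le[of "WW I lam w"] WW_coeffs(1)[OF fin ne, of lam w] by simp
  ultimately show ?thesis by simp
qed

lemma sum_except:
  fixes lam w :: "nat \<Rightarrow> real"
  assumes fin: "finite I"
  shows "(\<Sum>i\<in>I. w i * (\<Sum>j\<in>I - {i}. lam j)) = (\<Sum>i\<in>I. w i) * (\<Sum>j\<in>I. lam j) - (\<Sum>i\<in>I. w i * lam i)"
proof -
  have "(\<Sum>i\<in>I. w i * (\<Sum>j\<in>I - {i}. lam j)) = (\<Sum>i\<in>I. w i * (\<Sum>j\<in>I. lam j) - w i * lam i)"
    using fin by (intro sum.cong) (auto simp: sum_diff1 algebra_simps)
  also have "\<dots> = (\<Sum>i\<in>I. w i) * (\<Sum>j\<in>I. lam j) - (\<Sum>i\<in>I. w i * lam i)"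
    by (simp add: sum_subtractf sum_distrib_right)
  finally show ?thesis .
qed

lemma vieta_WW:
  assumes fin: "finite I" and c2: "card I \<ge> 2" and wnn: "\<forall>i\<in>I. 0 \<le> w i" and S: "(\<Sum>i\<in>I. w i) > 0"
  shows "sum_mset (proots (WW I lam w)) = (\<Sum>j\<in>I. lam j) - (\<Sum>i\<in>I. w i * lam i) / (\<Sum>i\<in>I. w i)"
proof -
  have ne: "I \<noteq> {}" using c2 by auto
  have "sum_mset (proots (WW I lam w)) = (\<Sum>i\<in>I. w i * (\<Sum>j\<in>I - {i}. lam j)) / (\<Sum>i\<in>I. w i)"
    using WW_vieta[OF fin c2 _ size_proots_WW[OF fin ne wnn S]] S by simp
  also have "\<dots> = (\<Sum>j\<in>I. lam j) - (\<Sum>i\<in>I. w i * lam i) / (\<Sum>i\<in>I. w i)"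
    unfolding sum_except[OF fin] using S by (simp add: field_simps)
  finally show ?thesis .
qed

lemma downset:
  fixes S :: "nat set"
  assumes sub: "S \<subseteq> {1..m}" and cl: "\<And>i j. j \<in> S \<Longrightarrow> 1 \<le> i \<Longrightarrow> i \<le> j \<Longrightarrow> i \<in> S"
  shows "S = {1..card S}"
proof (cases "S = {}")
  case True
  then show ?thesis by simp
next
  case False
  have fin: "finite S" using sub finite_subset by blast
  define M where "M = Max S"
  have MS: "M \<in> S" using fin False M_def by simp
  have "S = {1..M}"
  proof
    show "S \<subseteq> {1..M}" using sub fin M_def by auto
    show "{1..M} \<subseteq> S" using cl MS by auto
  qed
  then show ?thesis by simp
qed

lemma proots_lin_prod:
  fixes mu :: "nat \<Rightarrow> real"
  assumes "finite J"
  shows "proots (\<Prod>j\<in>J. [:- mu j, 1:]) = image_mset mu (mset_set J)"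
  using assms
proof (induction J rule: finite_induct)
  case empty
  then show ?case by simp
next
  case (insert x F)
  have "proots (\<Prod>j\<in>insert x F. [:- mu j, 1:]) = proots ([:- mu x, 1:] * (\<Prod>j\<in>F. [:- mu j, 1:]))"
    using insert by simp
  also have "\<dots> = proots [:- mu x, 1:] + proots (\<Prod>j\<in>F. [:- mu j, 1:])"
    by (rule proots_mult) (use insert.hyps(1) in \<open>auto simp: prod_zero_iff\<close>)
  finally show ?case using insert by simp
qed

lemma size_filter_image:
  assumes "finite J"
  shows "size (filter_mset P (image_mset f (mset_set J))) = card {j\<in>J. P (f j)}"
  using assms by (simp add: filter_mset_image_mset)

lemma arith_upper:
  fixes a K l r cG :: nat
  assumes a: "a = K - (if F then 1 else 0)"
    and gF: "G \<Longrightarrow> l \<le> K \<Longrightarrow> K \<le> r \<Longrightarrow> F"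
    and cG: "cG = card {l..min (r+1) K} - (if G then 1 else 0)"
    and l: "1 \<le> l" "l \<le> r"
  shows "card {l..min r a} \<le> cG"
proof -
  consider "K < l" | "l \<le> K" "K \<le> r" | "K \<ge> r + 1" by linarith
  then show ?thesis
  proof cases
    case 1
    then show ?thesis using a by simp
  next
    case 2
    then show ?thesis using a cG gF l by (cases G; cases F) (auto simp: min_def)
  next
    case 3
    then show ?thesis using a cG l by (cases G; cases F) (auto simp: min_def)
  qed
qed

lemma arith_lower:
  fixes a K l r cH :: nat
  assumes a: "a = K - (if F then 1 else 0)"
    and hneg: "K \<ge> r + 1 \<Longrightarrow> H"
    and hF: "\<not> H \<Longrightarrow> l \<le> K \<Longrightarrow> K \<le> r \<Longrightarrow> \<not> F"
    and cH: "cH = card {l..min (r+1) K} - (if H then 1 else 0)"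
    and l: "1 \<le> l" "l \<le> r"
  shows "cH \<le> card {l..min r a}"
proof -
  consider "K < l" | "l \<le> K" "K \<le> r" | "K \<ge> r + 1" by linarith
  then show ?thesis
  proof cases
    case 1
    then show ?thesis using cH by simp
  next
    case 2
    then show ?thesis using a cH hF l by (cases H; cases F) (auto simp: min_def)
  next
    case 3
    then show ?thesis using a cH hneg l by (cases F) (auto simp: min_def)
  qed
qed

lemma split_ivl:
  fixes f :: "nat \<Rightarrow> 'a::comm_monoid_add"
  assumes "a \<le> Suc b" "b \<le> c"
  shows "sum f {a..c} = sum f {a..b} + sum f {Suc b..c}"
proof -
  have "{a..c} = {a..b} \<union> {Suc b..c}" using assms by auto
  moreover have "{a..b} \<inter> {Suc b..c} = {}" by auto
  ultimately show ?thesis by (simp add: sum.union_disjoint)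
qed

lemma div_neg_mono:
  fixes a b w :: real
  assumes "a \<le> b" "b < 0" "0 \<le> w"
  shows "w / b \<le> w / a"
proof -
  have "w / (- a) \<le> w / (- b)" using assms by (intro divide_left_mono) (auto intro: mult_neg_neg)
  then show ?thesis by simp
qed

lemma cmpG:
  fixes lam w :: "nat \<Rightarrow> real"
  assumes sorted: "\<And>i j. 1 \<le> i \<Longrightarrow> i \<le> j \<Longrightarrow> j \<le> n \<Longrightarrow> lam j \<le> lam i"
    and wnn: "\<And>i. 1 \<le> i \<Longrightarrow> i \<le> n \<Longrightarrow> w i \<ge> 0"
    and lr: "1 \<le> l" "l \<le> r" "r + 1 \<le> n"
    and tl: "t < lam l" and tr: "lam (r + 1) < t"
  shows "ff {1..n} lam w t \<le> ff {l..r+1} lam (\<lambda>i. if i = r + 1 then (\<Sum>k=r+1..n. w k) else w i) t"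
proof -
  let ?f = "\<lambda>i. w i / (t - lam i)"
  have e1: "ff {1..n} lam w t = sum ?f {1..l-1} + sum ?f {l..r} + sum ?f {r+1..n}"
  proof -
    have "sum ?f {1..n} = sum ?f {1..r} + sum ?f {Suc r..n}" by (rule split_ivl) (use lr in auto)
    moreover have "sum ?f {1..r} = sum ?f {1..l-1} + sum ?f {Suc (l-1)..r}" by (rule split_ivl) (use lr in auto)
    moreover have "Suc (l - 1) = l" using lr by simp
    ultimately show ?thesis unfolding ff_def by simp
  qed
  have e2: "ff {l..r+1} lam (\<lambda>i. if i = r + 1 then (\<Sum>k=r+1..n. w k) else w i) t
      = sum ?f {l..r} + (\<Sum>k=r+1..n. w k) / (t - lam (r+1))"
  proof -
    have "{l..r+1} = insert (r+1) {l..r}" using lr by auto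
    then show ?thesis unfolding ff_def by (simp add: add.commute)
  qed
  have a: "sum ?f {1..l-1} \<le> 0"
  proof (rule sum_nonpos)
    fix i assume i: "i \<in> {1..l-1}"
    have "lam l \<le> lam i" using sorted[of i l] i lr by auto
    then have "t - lam i < 0" using tl by simp
    moreover have "w i \<ge> 0" using wnn i lr by auto
    ultimately show "?f i \<le> 0" by (simp add: divide_nonneg_neg)
  qed
  have b: "sum ?f {r+1..n} \<le> (\<Sum>k=r+1..n. w k) / (t - lam (r+1))"
  proof -
    have "sum ?f {r+1..n} \<le> (\<Sum>k=r+1..n. w k / (t - lam (r+1)))"
    proof (rule sum_mono)
      fix i assume i: "i \<in> {r+1..n}"
      have "lam i \<le> lam (r+1)" using sorted[of "r+1" i] i by auto
      moreover have "w i \<ge> 0" using wnn i lr by auto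
      ultimately show "?f i \<le> w i / (t - lam (r+1))"
        using tr by (intro divide_left_mono) (auto intro: mult_pos_pos)
    qed
    then show ?thesis by (simp add: sum_divide_distrib)
  qed
  show ?thesis using e1 e2 a b by linarith
qed

lemma cmpH:
  fixes lam w :: "nat \<Rightarrow> real"
  assumes sorted: "\<And>i j. 1 \<le> i \<Longrightarrow> i \<le> j \<Longrightarrow> j \<le> n \<Longrightarrow> lam j \<le> lam i"
    and wnn: "\<And>i. 1 \<le> i \<Longrightarrow> i \<le> n \<Longrightarrow> w i \<ge> 0"
    and lr: "1 \<le> l" "l \<le> r" "r + 1 \<le> n"
    and tl: "t < lam l" and tr: "lam (r + 1) < t"
  shows "ff {l..r+1} lam (\<lambda>i. if i = l then (\<Sum>k=1..l. w k) else w i) t \<le> ff {1..n} lam w t"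
proof -
  let ?f = "\<lambda>i. w i / (t - lam i)"
  have e1: "ff {1..n} lam w t = sum ?f {1..l} + sum ?f {Suc l..r+1} + sum ?f {Suc (r+1)..n}"
  proof -
    have "sum ?f {1..n} = sum ?f {1..r+1} + sum ?f {Suc (r+1)..n}" by (rule split_ivl) (use lr in auto)
    moreover have "sum ?f {1..r+1} = sum ?f {1..l} + sum ?f {Suc l..r+1}" by (rule split_ivl) (use lr in auto)
    ultimately show ?thesis unfolding ff_def by simp
  qed
  have e2: "ff {l..r+1} lam (\<lambda>i. if i = l then (\<Sum>k=1..l. w k) else w i) t
      = (\<Sum>k=1..l. w k) / (t - lam l) + sum ?f {Suc l..r+1}"
  proof -
    have "{l..r+1} = insert l {Suc l..r+1}" using lr by auto
    then show ?thesis unfolding ff_def by simp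
  qed
  have a: "(\<Sum>k=1..l. w k) / (t - lam l) \<le> sum ?f {1..l}"
  proof -
    have "(\<Sum>k=1..l. w k / (t - lam l)) \<le> sum ?f {1..l}"
    proof (rule sum_mono)
      fix i assume i: "i \<in> {1..l}"
      have "lam l \<le> lam i" using sorted[of i l] i lr by auto
      moreover have "w i \<ge> 0" using wnn i lr by auto
      ultimately show "w i / (t - lam l) \<le> ?f i"
        using tl by (intro div_neg_mono) auto
    qed
    then show ?thesis by (simp add: sum_divide_distrib)
  qed
  have b: "0 \<le> sum ?f {Suc (r+1)..n}"
  proof (rule sum_nonneg)
    fix i assume i: "i \<in> {Suc (r+1)..n}"
    have "lam i \<le> lam (r+1)" using sorted[of "r+1" i] i by auto
    then have "t - lam i > 0" using tr by simp
    moreover have "w i \<ge> 0" using wnn i lr by auto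
    ultimately show "0 \<le> ?f i" by simp
  qed
  show ?thesis using e1 e2 a b by linarith
qed

theorem corollary2p3:
  fixes n :: nat and lam w mu :: "nat \<Rightarrow> real" and l r :: nat
  assumes n2: "n \<ge> 2"
    and lam_sorted: "\<And>i j. 1 \<le> i \<Longrightarrow> i \<le> j \<Longrightarrow> j \<le> n \<Longrightarrow> lam j \<le> lam i"
    and w_nonneg: "\<And>i. 1 \<le> i \<Longrightarrow> i \<le> n \<Longrightarrow> w i \<ge> 0"
    and w_sum: "(\<Sum>i=1..n. w i) = 1"
    and mu_sorted: "\<And>i j. 1 \<le> i \<Longrightarrow> i \<le> j \<Longrightarrow> j \<le> n - 1 \<Longrightarrow> mu j \<le> mu i"
    and mu_roots: "wpoly n lam w = (\<Prod>j=1..n-1. [:- mu j, 1:])"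
    and lr: "1 \<le> l" "l \<le> r" "r \<le> n - 1"
    and U_nz: "(\<Sum>i=l..n. w i) \<noteq> 0"
    and L_nz: "(\<Sum>i=1..r+1. w i) \<noteq> 0"
  shows "(\<Sum>j=l..r. lam (j+1)) + (\<Sum>j=l..r. w (j+1) * (lam l - lam (j+1))) \<le> (\<Sum>j=l..r. mu j)
       \<and> (\<Sum>j=l..r. mu j) \<le> (\<Sum>j=l..r. lam j) - (\<Sum>j=l..r. w j * (lam j - lam (r+1)))"
proof -
  define p where "p = WW {1..n} lam w"
  have pW: "wpoly n lam w = p" unfolding p_def wpoly_def WW_def ..
  have rn: "r + 1 \<le> n" using lr n2 by simp
  have wnn: "\<forall>i\<in>{1..n}. 0 \<le> w i" using w_nonneg by auto
  have Sw: "(\<Sum>i\<in>{1..n}. w i) > 0" using w_sum by simp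
  have prootsp: "proots p = image_mset mu (mset_set {1..n-1})"
    using mu_roots pW proots_lin_prod[of "{1..n-1}" mu] by simp
  have cntp: "cnt p t = card {j\<in>{1..n-1}. t < mu j}" for t
    unfolding cnt_def prootsp by (rule size_filter_image) simp
  have mudown: "{j\<in>{1..n-1}. t < mu j} = {1..cnt p t}" for t
  proof -
    have "{j\<in>{1..n-1}. t < mu j} = {1..card {j\<in>{1..n-1}. t < mu j}}"
    proof (rule downset[of _ "n - 1"])
      fix i j assume "j \<in> {j\<in>{1..n-1}. t < mu j}" "1 \<le> i" "i \<le> j"
      then show "i \<in> {j\<in>{1..n-1}. t < mu j}" using mu_sorted[of i j] by auto
    qed auto
    then show ?thesis using cntp by simp
  qed
  have lamdown: "{i\<in>{1..n}. t < lam i} = {1..card {i\<in>{1..n}. t < lam i}}" for t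
  proof (rule downset[of _ n])
    fix i j assume "j \<in> {j\<in>{1..n}. t < lam j}" "1 \<le> i" "i \<le> j"
    then show "i \<in> {j\<in>{1..n}. t < lam j}" using lam_sorted[of i j] by auto
  qed auto
  define wG where "wG = (\<lambda>i. if i = r + 1 then (\<Sum>k=r+1..n. w k) else w i)"
  define wH where "wH = (\<lambda>i. if i = l then (\<Sum>k=1..l. w k) else w i)"
  define IG where "IG = {l..r+1}"
  define G where "G = WW IG lam wG"
  define H where "H = WW IG lam wH"
  have finIG: "finite IG" and neIG: "IG \<noteq> {}" and cIG: "card IG = r - l + 2"
    using lr unfolding IG_def by auto
  have wGnn: "\<forall>i\<in>IG. 0 \<le> wG i"
    using w_nonneg rn lr unfolding wG_def IG_def by (auto intro: sum_nonneg)
  have wHnn: "\<forall>i\<in>IG. 0 \<le> wH i"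
    using w_nonneg rn lr unfolding wH_def IG_def by (auto intro: sum_nonneg)
  have SG: "(\<Sum>i\<in>IG. wG i) = (\<Sum>i=l..r. w i) + (\<Sum>k=r+1..n. w k)"
  proof -
    have "IG = insert (r+1) {l..r}" using lr IG_def by auto
    then show ?thesis unfolding wG_def by (simp add: add.commute)
  qed
  have U: "(\<Sum>i=l..n. w i) = (\<Sum>i=l..r. w i) + (\<Sum>k=r+1..n. w k)"
    using split_ivl[of l r n w] lr rn by simp
  have SH: "(\<Sum>i\<in>IG. wH i) = (\<Sum>k=1..l. w k) + (\<Sum>i=Suc l..r+1. w i)"
  proof -
    have "IG = insert l {Suc l..r+1}" using lr IG_def by auto
    then show ?thesis unfolding wH_def by simp
  qed
  have L: "(\<Sum>i=1..r+1. w i) = (\<Sum>k=1..l. w k) + (\<Sum>i=Suc l..r+1. w i)"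
    using split_ivl[of 1 l "r+1" w] lr by simp
  have Unn: "(\<Sum>i=l..n. w i) \<ge> 0" using w_nonneg lr by (auto intro: sum_nonneg)
  have Lnn: "(\<Sum>i=1..r+1. w i) \<ge> 0" by (intro sum_nonneg) (use w_nonneg rn in auto)
  have Upos: "(\<Sum>i\<in>IG. wG i) > 0" using SG U Unn U_nz by simp
  have Lpos: "(\<Sum>i\<in>IG. wH i) > 0" using SH L Lnn L_nz by simp
  have Ule: "(\<Sum>i=l..n. w i) \<le> 1"
  proof -
    have "(\<Sum>i=l..n. w i) \<le> (\<Sum>i=1..n. w i)" using w_nonneg lr by (intro sum_mono2) auto
    then show ?thesis using w_sum by simp
  qed
  have Lle: "(\<Sum>i=1..r+1. w i) \<le> 1"
  proof -
    have "(\<Sum>i=1..r+1. w i) \<le> (\<Sum>i=1..n. w i)" using w_nonneg rn by (intro sum_mono2) auto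
    then show ?thesis using w_sum by simp
  qed
  have cG2: "card IG \<ge> 2" using cIG lr by simp
  have szG: "size (proots G) = r - l + 1"
    using size_proots_WW[OF finIG neIG wGnn Upos] cIG lr unfolding G_def by simp
  have szH: "size (proots H) = r - l + 1"
    using size_proots_WW[OF finIG neIG wHnn Lpos] cIG lr unfolding H_def by simp
  define M1 where "M1 = image_mset mu (mset_set {l..r})"
  have szM1: "size M1 = r - l + 1" using lr by (simp add: M1_def)
  have win: "size (filter_mset (\<lambda>x. t < x) M1) = card {l..min r (cnt p t)}" for t
  proof -
    have "size (filter_mset (\<lambda>x. t < x) M1) = card {j\<in>{l..r}. t < mu j}"
      unfolding M1_def by (rule size_filter_image) simp
    also have "{j\<in>{l..r}. t < mu j} = {l..r} \<inter> {j\<in>{1..n-1}. t < mu j}" using lr by auto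
    also have "\<dots> = {l..min r (cnt p t)}" unfolding mudown using lr by auto
    finally show ?thesis .
  qed
  have CFp: "cnt p t = card {i\<in>{1..n}. t < lam i} - (if ff {1..n} lam w t \<le> 0 then 1 else 0)"
    if "t \<notin> lam ` {1..n}" for t
    unfolding p_def by (rule CF) (use wnn Sw that n2 in auto)
  have KG: "{i\<in>IG. t < lam i} = {l..min (r+1) (card {i\<in>{1..n}. t < lam i})}" for t
  proof -
    have "{i\<in>IG. t < lam i} = IG \<inter> {i\<in>{1..n}. t < lam i}" using lr rn IG_def by auto
    also have "\<dots> = {l..min (r+1) (card {i\<in>{1..n}. t < lam i})}"
      by (subst lamdown) (use lr in \<open>auto simp: IG_def\<close>)
    finally show ?thesis .
  qed
  have IGsub: "IG \<subseteq> {1..n}" using lr rn IG_def by auto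
  have upc: "card {l..min r (cnt p t)} \<le> cnt G t" if t: "t \<notin> lam ` {1..n}" for t
  proof -
    define K where "K = card {i\<in>{1..n}. t < lam i}"
    have Kd: "{i\<in>{1..n}. t < lam i} = {1..K}" using lamdown K_def by simp
    have tG: "t \<notin> lam ` IG" using t IGsub by auto
    have cG: "cnt G t = card {l..min (r+1) K} - (if ff IG lam wG t \<le> 0 then 1 else 0)"
      unfolding G_def using CF[OF finIG neIG wGnn Upos tG] KG K_def by simp
    have cp: "cnt p t = K - (if ff {1..n} lam w t \<le> 0 then 1 else 0)" using CFp[OF t] K_def by simp
    show ?thesis
    proof (rule arith_upper[OF cp _ cG lr(1,2)])
      assume g: "ff IG lam wG t \<le> 0" and K: "l \<le> K" "K \<le> r"
      have "l \<in> {i\<in>{1..n}. t < lam i}" unfolding Kd using K lr by auto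
      then have tl: "t < lam l" by simp
      have "r + 1 \<notin> {i\<in>{1..n}. t < lam i}" unfolding Kd using K by auto
      then have "\<not> t < lam (r+1)" using rn by simp
      moreover have "lam (r+1) \<noteq> t" using t rn by force
      ultimately have tr: "lam (r+1) < t" by simp
      have "ff {1..n} lam w t \<le> ff IG lam wG t"
        unfolding IG_def wG_def by (rule cmpG[OF lam_sorted w_nonneg lr(1,2) rn tl tr])
      then show "ff {1..n} lam w t \<le> 0" using g by simp
    qed
  qed
  have lowc: "cnt H t \<le> card {l..min r (cnt p t)}" if t: "t \<notin> lam ` {1..n}" for t
  proof -
    define K where "K = card {i\<in>{1..n}. t < lam i}"
    have Kd: "{i\<in>{1..n}. t < lam i} = {1..K}" using lamdown K_def by simp
    have tG: "t \<notin> lam ` IG" using t IGsub by auto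
    have cH: "cnt H t = card {l..min (r+1) K} - (if ff IG lam wH t \<le> 0 then 1 else 0)"
      unfolding H_def using CF[OF finIG neIG wHnn Lpos tG] KG K_def by simp
    have cp: "cnt p t = K - (if ff {1..n} lam w t \<le> 0 then 1 else 0)" using CFp[OF t] K_def by simp
    show ?thesis
    proof (rule arith_lower[OF cp _ _ cH lr(1,2)])
      assume K: "K \<ge> r + 1"
      have "\<forall>i\<in>IG. t < lam i"
      proof
        fix i assume "i \<in> IG"
        then have "i \<in> {i\<in>{1..n}. t < lam i}" unfolding Kd using K lr IG_def by auto
        then show "t < lam i" by simp
      qed
      then have "ff IG lam wH t < 0" by (rule ff_neg[OF finIG wHnn Lpos])
      then show "ff IG lam wH t \<le> 0" by simp
    next
      assume h: "\<not> ff IG lam wH t \<le> 0" and K: "l \<le> K" "K \<le> r"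
      have "l \<in> {i\<in>{1..n}. t < lam i}" unfolding Kd using K lr by auto
      then have tl: "t < lam l" by simp
      have "r + 1 \<notin> {i\<in>{1..n}. t < lam i}" unfolding Kd using K by auto
      then have "\<not> t < lam (r+1)" using rn by simp
      moreover have "lam (r+1) \<noteq> t" using t rn by force
      ultimately have tr: "lam (r+1) < t" by simp
      have "ff IG lam wH t \<le> ff {1..n} lam w t"
        unfolding IG_def wH_def by (rule cmpH[OF lam_sorted w_nonneg lr(1,2) rn tl tr])
      then show "\<not> ff {1..n} lam w t \<le> 0" using h by simp
    qed
  qed
  have allt: "size (filter_mset (\<lambda>x. t < x) M1) \<le> size (filter_mset (\<lambda>x. t < x) (proots G))
      \<and> size (filter_mset (\<lambda>x. t < x) (proots H)) \<le> size (filter_mset (\<lambda>x. t < x) M1)" for t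
  proof -
    define F where "F = lam ` {1..n} \<union> set_mset M1 \<union> set_mset (proots G) \<union> set_mset (proots H)"
    have "finite F" by (simp add: F_def)
    then obtain t' where t': "t < t'" "\<forall>x\<in>F. (t < x \<longleftrightarrow> t' < x)" using perturb by blast
    have tnot: "t' \<notin> lam ` {1..n}"
    proof
      assume "t' \<in> lam ` {1..n}"
      then have "t' \<in> F" by (simp add: F_def)
      then show False using t' by auto
    qed
    have e1: "filter_mset (\<lambda>x. t < x) M1 = filter_mset (\<lambda>x. t' < x) M1"
      by (rule filter_mset_cong) (use t' in \<open>auto simp: F_def\<close>)
    have e2: "filter_mset (\<lambda>x. t < x) (proots G) = filter_mset (\<lambda>x. t' < x) (proots G)"
      by (rule filter_mset_cong) (use t' in \<open>auto simp: F_def\<close>)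
    have e3: "filter_mset (\<lambda>x. t < x) (proots H) = filter_mset (\<lambda>x. t' < x) (proots H)"
      by (rule filter_mset_cong) (use t' in \<open>auto simp: F_def\<close>)
    show ?thesis
      unfolding e1 e2 e3 win using upc[OF tnot] lowc[OF tnot] unfolding cnt_def by simp
  qed
  have up1: "sum_mset M1 \<le> sum_mset (proots G)"
    by (rule msum_le) (use szM1 szG allt in auto)
  have lo1: "sum_mset (proots H) \<le> sum_mset M1"
    by (rule msum_le) (use szM1 szH allt in auto)
  have sM1: "sum_mset M1 = (\<Sum>j=l..r. mu j)" by (simp add: M1_def sum_unfold_sum_mset)
  define a where "a = (\<Sum>i=l..r. w i)"
  define b where "b = (\<Sum>k=r+1..n. w k)"
  define s1 where "s1 = (\<Sum>j=l..r. w j * (lam j - lam (r+1)))"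
  have IGi: "IG = insert (r+1) {l..r}" using lr IG_def by auto
  have lamG: "(\<Sum>j\<in>IG. lam j) = (\<Sum>j=l..r. lam j) + lam (r+1)"
    unfolding IGi by simp
  have wlG: "(\<Sum>i\<in>IG. wG i * lam i) = (\<Sum>i=l..r. w i * lam i) + b * lam (r+1)"
    unfolding IGi wG_def b_def by simp
  have s1e: "s1 = (\<Sum>i=l..r. w i * lam i) - a * lam (r+1)"
    unfolding s1_def a_def right_diff_distrib sum_subtractf sum_distrib_right by simp
  have s1nn: "s1 \<ge> 0" unfolding s1_def
    by (intro sum_nonneg mult_nonneg_nonneg) (use w_nonneg lam_sorted lr rn in auto)
  have ab: "(\<Sum>i\<in>IG. wG i) = a + b" using SG a_def b_def by simp
  have abpos: "a + b > 0" using Upos ab by simp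
  have able: "a + b \<le> 1" using Ule U a_def b_def by simp
  have vG: "sum_mset (proots G) = (\<Sum>j=l..r. lam j) - s1 / (a + b)"
  proof -
    have "sum_mset (proots G) = (\<Sum>j\<in>IG. lam j) - (\<Sum>i\<in>IG. wG i * lam i) / (\<Sum>i\<in>IG. wG i)"
      unfolding G_def by (rule vieta_WW[OF finIG cG2 wGnn Upos])
    also have "\<dots> = (\<Sum>j=l..r. lam j) - s1 / (a + b)"
      unfolding lamG wlG ab s1e using abpos by (simp add: field_simps)
    finally show ?thesis .
  qed
  have "s1 \<le> s1 / (a + b)"
    using abpos mult_left_le[OF able s1nn] by (simp add: le_divide_eq)
  then have upper: "sum_mset (proots G) \<le> (\<Sum>j=l..r. lam j) - s1" using vG by simp
  define c where "c = (\<Sum>k=1..l. w k)"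
  define d where "d = (\<Sum>i=Suc l..r+1. w i)"
  define s2 where "s2 = (\<Sum>i=Suc l..r+1. w i * (lam l - lam i))"
  have IHi: "IG = insert l {Suc l..r+1}" using lr IG_def by auto
  have lamH: "(\<Sum>j\<in>IG. lam j) = lam l + (\<Sum>j=Suc l..r+1. lam j)"
    unfolding IHi by simp
  have wlH: "(\<Sum>i\<in>IG. wH i * lam i) = c * lam l + (\<Sum>i=Suc l..r+1. w i * lam i)"
    unfolding IHi wH_def c_def by simp
  have s2e: "s2 = d * lam l - (\<Sum>i=Suc l..r+1. w i * lam i)"
    unfolding s2_def d_def right_diff_distrib sum_subtractf sum_distrib_right by (simp add: mult.commute)
  have s2nn: "s2 \<ge> 0" unfolding s2_def
    by (intro sum_nonneg mult_nonneg_nonneg) (use w_nonneg lam_sorted lr rn in auto)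
  have cd: "(\<Sum>i\<in>IG. wH i) = c + d" using SH c_def d_def by simp
  have cdpos: "c + d > 0" using Lpos cd by simp
  have cdle: "c + d \<le> 1" using Lle L c_def d_def by simp
  have vH: "sum_mset (proots H) = (\<Sum>j=Suc l..r+1. lam j) + s2 / (c + d)"
  proof -
    have "sum_mset (proots H) = (\<Sum>j\<in>IG. lam j) - (\<Sum>i\<in>IG. wH i * lam i) / (\<Sum>i\<in>IG. wH i)"
      unfolding H_def by (rule vieta_WW[OF finIG cG2 wHnn Lpos])
    also have "\<dots> = (\<Sum>j=Suc l..r+1. lam j) + s2 / (c + d)"
      unfolding lamH wlH cd s2e using cdpos by (simp add: field_simps)
    finally show ?thesis .
  qed
  have "s2 \<le> s2 / (c + d)"
    using cdpos mult_left_le[OF cdle s2nn] by (simp add: le_divide_eq)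
  then have lower: "(\<Sum>j=Suc l..r+1. lam j) + s2 \<le> sum_mset (proots H)" using vH by simp
  have sh1: "(\<Sum>j=l..r. lam (j+1)) = (\<Sum>j=Suc l..r+1. lam j)"
    using sum.shift_bounds_cl_Suc_ivl[of lam l r] by simp
  have sh2: "(\<Sum>j=l..r. w (j+1) * (lam l - lam (j+1))) = s2"
    unfolding s2_def using sum.shift_bounds_cl_Suc_ivl[of "\<lambda>i. w i * (lam l - lam i)" l r] by simp
  show ?thesis
    using up1 lo1 sM1 upper lower sh1 sh2 unfolding s1_def by linarith
qed

end
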